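(* Let $G$ be a connected chordal graph that is not complete. Then $\kappa(G)=a(G)$ if and only if $G$ has a minimal separator $S$ such that every vertex of $S$ is a universal vertex of $G$.
   Context: All graphs are finite, simple and undirected. A graph is chordal if every cycle of length at least four has a chord. The Laplacian matrix of $G$ is $L(G)=D(G)-A(G)$, where $D(G)$ is the diagonal matrix of vertex degrees and $A(G)$ the adjacency matrix; its eigenvalues are $\mu_1(G)\ge\dots\ge\mu_n(G)=0$. The algebraic connectivity is $a(G)=\mu_{n-1}(G)$. A set $S\subset V$ is a separator of $G$ if at least two vertices lying in the same connected component of $G$ lie in distinct connected components of $G[V\setminus S]$; $S$ is a minimal separator if it is a separator and no proper subset of $S$ is a separator. The vertex connectivity $\kappa(G)$ is the minimum cardinality of a separator of $G$. A vertex is universal if it is adjacent to all other vertices. *)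

theory Defs
  imports "Jordan_Normal_Form.Char_Poly"
begin

(* A finite simple graph on vertex set {0..<n} with symmetric irreflexive adjacency E
   (only the values of E on {0..<n} matter). *)
definition simple_graph :: "nat \<Rightarrow> (nat \<Rightarrow> nat \<Rightarrow> bool) \<Rightarrow> bool" where
  "simple_graph n E \<longleftrightarrow> (\<forall>u<n. \<forall>v<n. E u v \<longleftrightarrow> E v u) \<and> (\<forall>u<n. \<not> E u u)"

definition reach_in :: "(nat \<Rightarrow> nat \<Rightarrow> bool) \<Rightarrow> nat set \<Rightarrow> nat \<Rightarrow> nat \<Rightarrow> bool" where
  "reach_in E U u v \<longleftrightarrow> u \<in> U \<and> v \<in> U \<and> (u, v) \<in> {(x, y). x \<in> U \<and> y \<in> U \<and> E x y}\<^sup>*"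

definition connected_graph :: "nat \<Rightarrow> (nat \<Rightarrow> nat \<Rightarrow> bool) \<Rightarrow> bool" where
  "connected_graph n E \<longleftrightarrow> (\<forall>u<n. \<forall>v<n. reach_in E {..<n} u v)"

definition complete_graph :: "nat \<Rightarrow> (nat \<Rightarrow> nat \<Rightarrow> bool) \<Rightarrow> bool" where
  "complete_graph n E \<longleftrightarrow> (\<forall>u<n. \<forall>v<n. u \<noteq> v \<longrightarrow> E u v)"

definition universal_vertex :: "nat \<Rightarrow> (nat \<Rightarrow> nat \<Rightarrow> bool) \<Rightarrow> nat \<Rightarrow> bool" where
  "universal_vertex n E v \<longleftrightarrow> v < n \<and> (\<forall>u<n. u \<noteq> v \<longrightarrow> E v u)"

definition is_cycle :: "nat \<Rightarrow> (nat \<Rightarrow> nat \<Rightarrow> bool) \<Rightarrow> nat list \<Rightarrow> bool" where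
  "is_cycle n E cs \<longleftrightarrow> length cs \<ge> 3 \<and> distinct cs \<and> set cs \<subseteq> {..<n} \<and>
     (\<forall>i<length cs. E (cs ! i) (cs ! ((i + 1) mod length cs)))"

definition has_chord :: "(nat \<Rightarrow> nat \<Rightarrow> bool) \<Rightarrow> nat list \<Rightarrow> bool" where
  "has_chord E cs \<longleftrightarrow> (\<exists>i<length cs. \<exists>j<length cs. i \<noteq> j \<and>
     j \<noteq> (i + 1) mod length cs \<and> i \<noteq> (j + 1) mod length cs \<and> E (cs ! i) (cs ! j))"

definition chordal :: "nat \<Rightarrow> (nat \<Rightarrow> nat \<Rightarrow> bool) \<Rightarrow> bool" where
  "chordal n E \<longleftrightarrow> (\<forall>cs. is_cycle n E cs \<and> length cs \<ge> 4 \<longrightarrow> has_chord E cs)"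

definition separator :: "nat \<Rightarrow> (nat \<Rightarrow> nat \<Rightarrow> bool) \<Rightarrow> nat set \<Rightarrow> bool" where
  "separator n E S \<longleftrightarrow> S \<subseteq> {..<n} \<and>
     (\<exists>u v. u \<in> {..<n} - S \<and> v \<in> {..<n} - S \<and> reach_in E {..<n} u v \<and>
            \<not> reach_in E ({..<n} - S) u v)"

definition minimal_separator :: "nat \<Rightarrow> (nat \<Rightarrow> nat \<Rightarrow> bool) \<Rightarrow> nat set \<Rightarrow> bool" where
  "minimal_separator n E S \<longleftrightarrow> separator n E S \<and> (\<forall>T. T \<subset> S \<longrightarrow> \<not> separator n E T)"

definition vertex_connectivity :: "nat \<Rightarrow> (nat \<Rightarrow> nat \<Rightarrow> bool) \<Rightarrow> nat" where
  "vertex_connectivity n E = Min {card S | S. separator n E S}"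

definition laplacian :: "nat \<Rightarrow> (nat \<Rightarrow> nat \<Rightarrow> bool) \<Rightarrow> real mat" where
  "laplacian n E = mat n n (\<lambda>(i, j). if i = j then real (card {k. k < n \<and> E i k})
                                       else if E i j then -1 else 0)"

(* Laplacian eigenvalues with multiplicity, sorted increasingly:
   mu_n = 0 <= mu_{n-1} <= ... <= mu_1 *)
definition laplacian_eigenvalues :: "nat \<Rightarrow> (nat \<Rightarrow> nat \<Rightarrow> bool) \<Rightarrow> real list" where
  "laplacian_eigenvalues n E =
     (THE xs. sorted xs \<and> char_poly (laplacian n E) = (\<Prod>a\<leftarrow>xs. [:- a, 1:]))"

(* algebraic connectivity a(G) = mu_{n-1}(G), the second smallest Laplacian eigenvalue *)
definition algebraic_connectivity :: "nat \<Rightarrow> (nat \<Rightarrow> nat \<Rightarrow> bool) \<Rightarrow> real" where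
  "algebraic_connectivity n E = laplacian_eigenvalues n E ! 1"

end

theory Submission
  imports Defs "Jordan_Normal_Form.Schur_Decomposition"
begin


lemma sym_eig_real:
  fixes A :: "real mat" and w :: "complex vec"
  assumes A: "A \<in> carrier_mat n n" and sym: "\<And>i j. i<n \<Longrightarrow> j<n \<Longrightarrow> A$$(i,j) = A$$(j,i)"
    and w: "w \<in> carrier_vec n" "w \<noteq> 0\<^sub>v n" and ev: "map_mat complex_of_real A *\<^sub>v w = a \<cdot>\<^sub>v w"
  shows "Im a = 0"
proof -
  have rowi: "(\<Sum>j<n. complex_of_real (A$$(i,j)) * w$j) = a * w$i" if i: "i<n" for i
  proof -
    have "(map_mat complex_of_real A *\<^sub>v w) $ i = a * w$i" using ev i w by simp
    thus ?thesis using A w i by (simp add: scalar_prod_def row_def atLeast0LessThan)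
  qed
  define N where "N = (\<Sum>i<n. cnj (w$i) * w$i)"
  define s where "s = (\<Sum>i<n. cnj (w$i) * (\<Sum>j<n. complex_of_real (A$$(i,j)) * w$j))"
  have s1: "s = a * N" unfolding s_def N_def using rowi
    by (simp add: sum_distrib_left mult.commute mult.left_commute)
  have "cnj s = (\<Sum>i<n. w$i * (\<Sum>j<n. complex_of_real (A$$(i,j)) * cnj (w$j)))"
    unfolding s_def by (simp add: sum_distrib_left)
  also have "\<dots> = (\<Sum>i<n. \<Sum>j<n. w$i * complex_of_real (A$$(i,j)) * cnj (w$j))"
    by (simp add: sum_distrib_left mult.assoc)
  also have "\<dots> = (\<Sum>j<n. \<Sum>i<n. w$i * complex_of_real (A$$(i,j)) * cnj (w$j))"
    by (rule sum.swap)
  also have "\<dots> = s" unfolding s_def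
    by (auto simp: sum_distrib_left sym mult.commute mult.left_commute intro!: sum.cong)
  finally have cs: "cnj s = s" .
  have Nr: "N = complex_of_real (\<Sum>i<n. (cmod (w$i))^2)" unfolding N_def
    unfolding of_real_sum by (intro sum.cong refl) (metis complex_norm_square mult.commute of_real_power)
  have "\<exists>i<n. w$i \<noteq> 0" using w by (metis eq_vecI carrier_vecD index_zero_vec(1) index_zero_vec(2))
  then obtain i where i: "i<n" "w$i \<noteq> 0" by blast
  have "(\<Sum>i<n. (cmod (w$i))^2) > 0"
    by (rule sum_pos2[of _ i]) (use i in auto)
  hence N0: "N \<noteq> 0" unfolding Nr by (metis of_real_eq_0_iff less_irrefl)
  have "cnj a * cnj N = a * N" using cs s1 by simp
  moreover have "cnj N = N" unfolding Nr by (simp only: complex_cnj_complex_of_real)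
  ultimately have "cnj a = a" using N0 by simp
  thus ?thesis by (metis cnj.simps(2) neg_equal_zero)
qed

lemma sym_real_eigvec:
  fixes A :: "real mat"
  assumes A: "A \<in> carrier_mat n n" and sym: "\<And>i j. i<n \<Longrightarrow> j<n \<Longrightarrow> A$$(i,j) = A$$(j,i)"
    and n: "n > 0"
  shows "\<exists>e v. v \<in> carrier_vec n \<and> v \<noteq> 0\<^sub>v n \<and> A *\<^sub>v v = e \<cdot>\<^sub>v v"
proof -
  let ?C = "map_mat complex_of_real A"
  have C: "?C \<in> carrier_mat n n" using A by simp
  obtain as where as: "char_poly ?C = (\<Prod>a\<leftarrow>as. [:- a, 1:])" "length as = n"
    using char_poly_factorized[OF C] by blast
  then obtain a where a: "a \<in> set as" using n by (cases as) auto
  have "poly (char_poly ?C) a = 0" unfolding as(1) using a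
    by (simp add: poly_prod_list prod_list_zero_iff)
  hence "eigenvalue ?C a" using eigenvalue_root_char_poly[OF C] by simp
  then obtain w where w: "eigenvector ?C w a" unfolding eigenvalue_def by blast
  hence wc: "w \<in> carrier_vec n" "w \<noteq> 0\<^sub>v n" "?C *\<^sub>v w = a \<cdot>\<^sub>v w"
    unfolding eigenvector_def using C by auto
  have ima: "Im a = 0" by (rule sym_eig_real[OF A sym wc]) auto
  hence aRe: "a = complex_of_real (Re a)" by (simp add: complex_eq_iff)
  have "char_poly ?C = map_poly complex_of_real (char_poly A)"
    using of_real_hom.char_poly_hom[OF A] by simp
  hence "complex_of_real (poly (char_poly A) (Re a)) = 0"
    using \<open>poly (char_poly ?C) a = 0\<close> aRe by (metis of_real_hom.poly_map_poly)
  hence "poly (char_poly A) (Re a) = 0" by simp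
  hence "eigenvalue A (Re a)" using eigenvalue_root_char_poly[OF A] by simp
  then obtain v where "eigenvector A v (Re a)" unfolding eigenvalue_def by blast
  thus ?thesis unfolding eigenvector_def using A by auto
qed


lemma real_cscalar: fixes v w :: "real vec" shows "v \<bullet>c w = v \<bullet> w"
  by (simp add: scalar_prod_def)

lemma real_sq_pos: fixes v :: "real vec"
  assumes "v \<in> carrier_vec n" "v \<noteq> 0\<^sub>v n" shows "v \<bullet> v > 0"
proof -
  have "v \<bullet>c v \<ge> 0" by (rule conjugate_square_ge_0_vec)
  moreover have "v \<bullet>c v \<noteq> 0" using assms conjugate_square_eq_0_vec by blast
  ultimately show ?thesis by (simp add: real_cscalar)
qed

lemma spectral_real:
  fixes A :: "real mat"
  assumes "A \<in> carrier_mat n n" "transpose_mat A = A"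
  shows "\<exists>U D. U \<in> carrier_mat n n \<and> D \<in> carrier_mat n n \<and> transpose_mat U * U = 1\<^sub>m n
     \<and> transpose_mat U * A * U = D \<and> diagonal_mat D"
  using assms
proof (induction n arbitrary: A)
  case 0
  then show ?case by (intro exI[of _ "1\<^sub>m 0"] exI[of _ A]) (auto simp: diagonal_mat_def)
next
  case (Suc m A)
  let ?n = "Suc m"
  have A: "A \<in> carrier_mat ?n ?n" by fact
  have symT: "transpose_mat A = A" by fact
  have sym: "A$$(i,j) = A$$(j,i)" if "i < ?n" "j < ?n" for i j
    using that A by (metis carrier_matD index_transpose_mat(1) symT)
  obtain e v where v: "v \<in> carrier_vec ?n" "v \<noteq> 0\<^sub>v ?n" "A *\<^sub>v v = e \<cdot>\<^sub>v v"
    using sym_real_eigvec[OF A sym] by auto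
  define u where "u = (1 / sqrt (v \<bullet> v)) \<cdot>\<^sub>v v"
  have vv: "v \<bullet> v > 0" using real_sq_pos v by blast
  have u1: "u \<in> carrier_vec ?n" unfolding u_def using v by simp
  have uu: "u \<bullet> u = 1" unfolding u_def using v vv
    by (simp add: smult_scalar_prod_distrib scalar_prod_smult_distrib real_sqrt_mult[symmetric])
  have u0: "u \<noteq> 0\<^sub>v ?n" using uu u1 by auto
  have Au: "A *\<^sub>v u = e \<cdot>\<^sub>v u" unfolding u_def using v A
    by (simp add: mult_mat_vec smult_smult_assoc mult.commute)
  interpret cof_vec_space ?n "TYPE(real)" .
  from basis_completion[OF u1 u0]
  have span_b: "span (set (basis_completion u)) = carrier_vec ?n"
    and dist_b: "distinct (basis_completion u)"
    and indep: "\<not> lin_dep (set (basis_completion u))"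
    and b: "set (basis_completion u) \<subseteq> carrier_vec ?n"
    and hdb: "hd (basis_completion u) = u"
    and len_b: "length (basis_completion u) = ?n" by auto
  define ws where "ws = gram_schmidt ?n (basis_completion u)"
  from gram_schmidt_result[OF b dist_b indep refl, folded ws_def]
  have ws: "set ws \<subseteq> carrier_vec ?n" "corthogonal ws" "length ws = ?n"
    by (auto simp: len_b)
  obtain us where bu: "basis_completion u = u # us" using hdb len_b by (cases "basis_completion u") auto
  have hdws: "ws ! 0 = u" unfolding ws_def bu using u1 by (metis gram_schmidt_hd hd_conv_nth ws(3)[unfolded ws_def bu] zero_less_Suc length_0_conv nat.simps(3))
  have wsc: "ws ! i \<in> carrier_vec ?n" if "i < ?n" for i using ws that by auto
  have wsn: "ws ! i \<bullet> ws ! i > 0" if i: "i < ?n" for i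
  proof -
    have "ws ! i \<bullet>c ws ! i \<noteq> 0" using corthogonalD[OF ws(2)] i ws(3) by auto
    moreover have "ws ! i \<bullet>c ws ! i \<ge> 0" by (rule conjugate_square_ge_0_vec)
    ultimately show ?thesis by (simp add: real_cscalar)
  qed
  have wso: "ws ! i \<bullet> ws ! j = 0" if "i < ?n" "j < ?n" "i \<noteq> j" for i j
    using corthogonalD[OF ws(2)] that ws(3) by (auto simp: real_cscalar)
  define ws' where "ws' = map (\<lambda>w. (1 / sqrt (w \<bullet> w)) \<cdot>\<^sub>v w) ws"
  have len': "length ws' = ?n" unfolding ws'_def using ws by simp
  have ws'c: "ws' ! i \<in> carrier_vec ?n" if "i < ?n" for i
    unfolding ws'_def using that wsc ws(3) by simp
  have orthn: "ws' ! i \<bullet> ws' ! j = (if i = j then 1 else 0)" if ij: "i < ?n" "j < ?n" for i j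
  proof -
    have "ws' ! i \<bullet> ws' ! j = (1 / sqrt (ws!i \<bullet> ws!i)) * (1 / sqrt (ws!j \<bullet> ws!j)) * (ws!i \<bullet> ws!j)"
      unfolding ws'_def using ij ws(3) wsc[OF ij(1)] wsc[OF ij(2)]
      by (simp add: smult_scalar_prod_distrib scalar_prod_smult_distrib)
    thus ?thesis using wso[OF ij] wsn[OF ij(1)]
      by (cases "i = j") (auto simp: real_sqrt_mult[symmetric])
  qed
  have hd': "ws' ! 0 = u" unfolding ws'_def using hdws uu ws(3) by simp
  define W where "W = mat_of_cols ?n ws'"
  have W: "W \<in> carrier_mat ?n ?n" unfolding W_def using len' by auto
  have colW: "col W i = ws' ! i" if "i < ?n" for i unfolding W_def
    using that len' ws'c by simp
  have WW: "transpose_mat W * W = 1\<^sub>m ?n"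
    by (rule eq_matI) (use W in \<open>auto simp: colW orthn\<close>)
  define A' where "A' = transpose_mat W * A * W"
  have A': "A' \<in> carrier_mat ?n ?n" unfolding A'_def using W A by auto
  have A'sym: "transpose_mat A' = A'"
  proof -
    have "transpose_mat A' = transpose_mat (transpose_mat W * (A * W))" unfolding A'_def using W A by simp
    also have "\<dots> = transpose_mat (A * W) * transpose_mat (transpose_mat W)"
      by (rule transpose_mult[of _ ?n ?n]) (use W A in auto)
    also have "transpose_mat (A * W) = transpose_mat W * transpose_mat A"
      by (rule transpose_mult[of _ ?n ?n]) (use W A in auto)
    finally show ?thesis unfolding A'_def symT by simp
  qed
  have col0: "A' $$ (i,0) = (if i = 0 then e else 0)" if i: "i < ?n" for i
  proof -
    have "A' = transpose_mat W * (A * W)" unfolding A'_def using W A by auto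
    hence "A' $$ (i,0) = row (transpose_mat W) i \<bullet> col (A * W) 0"
      using W A i by simp
    also have "row (transpose_mat W) i = ws' ! i" using i W colW by simp
    also have "col (A * W) 0 = A *\<^sub>v col W 0" using col_mult2[OF A W, of 0] by simp
    also have "col W 0 = u" using colW[of 0] hd' by simp
    also have "A *\<^sub>v u = e \<cdot>\<^sub>v u" by (rule Au)
    also have "ws' ! i \<bullet> (e \<cdot>\<^sub>v u) = e * (ws' ! i \<bullet> ws' ! 0)"
      using ws'c[OF i] u1 hd' by (simp add: scalar_prod_smult_distrib)
    finally show ?thesis using orthn[OF i] by simp
  qed
  have row0: "A' $$ (0,j) = (if j = 0 then e else 0)" if j: "j < ?n" for j
    using col0[OF j] A'sym j A' by (metis carrier_matD index_transpose_mat(1) zero_less_Suc)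
  define A3 where "A3 = mat m m (\<lambda>(i,j). A' $$ (Suc i, Suc j))"
  have A3: "A3 \<in> carrier_mat m m" unfolding A3_def by simp
  have A3sym: "transpose_mat A3 = A3"
    by (rule eq_matI) (use A3 A' A'sym in \<open>auto simp: A3_def, metis carrier_matD index_transpose_mat(1) Suc_less_eq\<close>)
  have A'blk: "A' = four_block_mat (mat 1 1 (\<lambda>_. e)) (0\<^sub>m 1 m) (0\<^sub>m m 1) A3"
    by (rule eq_matI) (use A' in \<open>auto simp: A3_def col0 row0 less_Suc_eq_0_disj\<close>)
  from Suc.IH[OF A3 A3sym] obtain U3 D3 where U3: "U3 \<in> carrier_mat m m" "D3 \<in> carrier_mat m m"
    "transpose_mat U3 * U3 = 1\<^sub>m m" "transpose_mat U3 * A3 * U3 = D3" "diagonal_mat D3" by blast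
  define Q where "Q = four_block_mat (1\<^sub>m 1) (0\<^sub>m 1 m) (0\<^sub>m m 1) U3"
  have Q: "Q \<in> carrier_mat ?n ?n" unfolding Q_def using four_block_carrier_mat[OF one_carrier_mat[of 1] U3(1)] by simp
  have QT: "transpose_mat (four_block_mat (1\<^sub>m 1) (0\<^sub>m 1 m) (0\<^sub>m m 1) U3) = four_block_mat (1\<^sub>m 1) (0\<^sub>m 1 m) (0\<^sub>m m 1) (transpose_mat U3)"
    by (subst transpose_four_block_mat[of _ 1 1 _ m _ m]) (use U3 in auto)
  define D where "D = four_block_mat (mat 1 1 (\<lambda>_. e)) (0\<^sub>m 1 m) (0\<^sub>m m 1) D3"
  have D: "D \<in> carrier_mat ?n ?n" unfolding D_def using four_block_carrier_mat[OF _ U3(2), of "mat 1 1 (\<lambda>_. e)" 1 1] by simp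
  have QQ: "transpose_mat Q * Q = 1\<^sub>m ?n"
  proof -
    have "transpose_mat Q * Q = four_block_mat (1\<^sub>m 1) (0\<^sub>m 1 m) (0\<^sub>m m 1) (transpose_mat U3 * U3)"
      unfolding Q_def QT using U3
      by (subst mult_four_block_mat[of _ 1 1 _ m _ m _ _ 1 _ m]) simp_all
    also have "\<dots> = 1\<^sub>m ?n" unfolding U3(3) by (rule eq_matI) auto
    finally show ?thesis .
  qed
  have QAQ: "transpose_mat Q * A' * Q = D"
  proof -
    have "transpose_mat Q * A' = four_block_mat (mat 1 1 (\<lambda>_. e)) (0\<^sub>m 1 m) (0\<^sub>m m 1) (transpose_mat U3 * A3)"
      unfolding Q_def QT A'blk using U3 A3
      by (subst mult_four_block_mat[of _ 1 1 _ m _ m _ _ 1 _ m]) simp_all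
    also have "\<dots> * Q = four_block_mat (mat 1 1 (\<lambda>_. e)) (0\<^sub>m 1 m) (0\<^sub>m m 1) (transpose_mat U3 * A3 * U3)"
      unfolding Q_def using U3 A3
      by (subst mult_four_block_mat[of _ 1 1 _ m _ m _ _ 1 _ m]) simp_all
    finally show ?thesis unfolding D_def U3(4) .
  qed
  define U where "U = W * Q"
  have U: "U \<in> carrier_mat ?n ?n" unfolding U_def using W Q by simp
  have UT: "transpose_mat U = transpose_mat Q * transpose_mat W"
    unfolding U_def using W Q by (simp add: transpose_mult[of _ ?n ?n])
  have UU: "transpose_mat U * U = 1\<^sub>m ?n"
  proof -
    have "transpose_mat U * U = transpose_mat Q * (transpose_mat W * W) * Q"
      unfolding UT using W Q by (simp add: U_def assoc_mult_mat[of _ ?n ?n _ ?n _ ?n])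
    thus ?thesis unfolding WW using Q QQ by simp
  qed
  have UAU: "transpose_mat U * A * U = D"
  proof -
    have "transpose_mat U * A * U = transpose_mat Q * (transpose_mat W * A * W) * Q"
      unfolding UT using W Q A by (simp add: U_def assoc_mult_mat[of _ ?n ?n _ ?n _ ?n])
    thus ?thesis using QAQ unfolding A'_def by simp
  qed
  have Ddiag: "diagonal_mat D" unfolding diagonal_mat_def D_def
    using U3(5) U3(2) by (auto simp: diagonal_mat_def)
  show ?case using U D UU UAU Ddiag by blast
qed


lemma prod_linear_mset:
  fixes xs ys :: "real list"
  assumes "(\<Prod>a\<leftarrow>xs. [:-a,1:]) = (\<Prod>a\<leftarrow>ys. [:-a,1:])"
  shows "mset xs = mset ys"
  using assms
proof (induction xs arbitrary: ys)
  case Nil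
  have "length ys = 0" using degree_linear_factors[of uminus ys] Nil by simp
  thus ?case by simp
next
  case (Cons x xs ys)
  have "poly (\<Prod>a\<leftarrow>ys. [:-a,1:]) x = 0" using Cons.prems[symmetric] by simp
  then have xy: "x \<in> set ys" by (auto simp: poly_prod_list prod_list_zero_iff)
  hence "(\<Prod>a\<leftarrow>ys. [:-a,1:]) = [:-x,1:] * (\<Prod>a\<leftarrow>remove1 x ys. [:-a,1:])" by (rule prod_list_map_remove1)
  with Cons.prems have "[:-x,1:] * (\<Prod>a\<leftarrow>xs. [:-a,1:]) = [:-x,1:] * (\<Prod>a\<leftarrow>remove1 x ys. [:-a,1:])" by simp
  hence "(\<Prod>a\<leftarrow>xs. [:-a,1:]) = (\<Prod>a\<leftarrow>remove1 x ys. [:-a,1:])"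
    by (subst (asm) mult_left_cancel) auto
  from Cons.IH[OF this] have "mset xs = mset (remove1 x ys)" .
  thus ?case using xy by simp
qed

lemma sort_unique_prod:
  fixes xs ds :: "real list"
  shows "(THE xs. sorted xs \<and> (\<Prod>a\<leftarrow>ds. [:-a,1:]) = (\<Prod>a\<leftarrow>xs. [:-a,1:])) = sort ds"
proof (rule the_equality)
  have "mset (map (\<lambda>a. [:-a,1:]) (sort ds)) = mset (map (\<lambda>a. [:-a,1:]) ds)" by simp
  hence "prod_list (map (\<lambda>a. [:-a,1:]) (sort ds)) = prod_list (map (\<lambda>a. [:-a,1:]) ds)"
    by (metis prod_mset_prod_list)
  thus "sorted (sort ds) \<and> (\<Prod>a\<leftarrow>ds. [:-a,1:]) = (\<Prod>a\<leftarrow>sort ds. [:-a,1:])" by simp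
next
  fix xs assume "sorted xs \<and> (\<Prod>a\<leftarrow>ds. [:-a,1:]) = (\<Prod>a\<leftarrow>xs. [:-a,1:])"
  hence "sorted xs" "mset xs = mset ds" using prod_linear_mset by metis+
  thus "xs = sort ds" by (metis properties_for_sort)
qed

lemma sym_eigen_decomp:
  fixes A :: "real mat"
  assumes A: "A \<in> carrier_mat n n" and sym: "transpose_mat A = A"
  shows "\<exists>U ds. U \<in> carrier_mat n n \<and> transpose_mat U * U = 1\<^sub>m n \<and> U * transpose_mat U = 1\<^sub>m n
     \<and> length ds = n
     \<and> (\<forall>i<n. \<forall>j<n. (transpose_mat U * A * U) $$ (i,j) = (if i = j then ds ! i else 0))
     \<and> char_poly A = (\<Prod>a\<leftarrow>ds. [:-a,1:])"
proof -
  obtain U D where UD: "U \<in> carrier_mat n n" "D \<in> carrier_mat n n" "transpose_mat U * U = 1\<^sub>m n"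
     "transpose_mat U * A * U = D" "diagonal_mat D"
    using spectral_real[OF A sym] by blast
  have UT: "transpose_mat U \<in> carrier_mat n n" using UD by simp
  have UUT: "U * transpose_mat U = 1\<^sub>m n"
    using mat_mult_left_right_inverse[OF UT UD(1) UD(3)] .
  define ds where "ds = diag_mat D"
  have AD: "A = U * D * transpose_mat U"
  proof -
    have "U * D * transpose_mat U = (U * transpose_mat U) * A * (U * transpose_mat U)"
      unfolding UD(4)[symmetric] using UD(1) UT A
      by (simp add: assoc_mult_mat[of _ n n _ n _ n])
    thus ?thesis unfolding UUT using A by simp
  qed
  have sim: "similar_mat A D" unfolding similar_mat_def similar_mat_wit_def
    by (rule exI[of _ U], rule exI[of _ "transpose_mat U"]) (use UD UT UUT A AD in \<open>auto simp: Let_def\<close>)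
  have ut: "upper_triangular D" using UD(5) UD(2) unfolding diagonal_mat_def upper_triangular_def by auto
  have "char_poly A = char_poly D" by (rule char_poly_similar[OF sim])
  also have "\<dots> = (\<Prod>a\<leftarrow>ds. [:-a,1:])" unfolding ds_def by (rule char_poly_upper_triangular[OF UD(2) ut])
  finally have cp: "char_poly A = (\<Prod>a\<leftarrow>ds. [:-a,1:])" .
  have len: "length ds = n" unfolding ds_def diag_mat_def using UD(2) by simp
  have ent: "\<forall>i<n. \<forall>j<n. (transpose_mat U * A * U) $$ (i,j) = (if i = j then ds ! i else 0)"
    unfolding UD(4) ds_def diag_mat_def using UD(2) UD(5) unfolding diagonal_mat_def by auto
  show ?thesis using UD(1,3) UUT len ent cp by blast
qed

lemma quad_U:
  fixes A U :: "real mat"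
  assumes A: "A \<in> carrier_mat n n" and U: "U \<in> carrier_mat n n" and UTU: "transpose_mat U * U = 1\<^sub>m n"
    and ent: "\<forall>i<n. \<forall>j<n. (transpose_mat U * A * U) $$ (i,j) = (if i = j then ds ! i else 0)"
    and c: "c \<in> carrier_vec n"
  shows "(U *\<^sub>v c) \<bullet> (A *\<^sub>v (U *\<^sub>v c)) = (\<Sum>i<n. ds!i * (c$i)^2)"
    and "(U *\<^sub>v c) \<bullet> (U *\<^sub>v c) = c \<bullet> c"
proof -
  have UT: "transpose_mat U \<in> carrier_mat n n" using U by simp
  have sw: "(U *\<^sub>v c) \<bullet> w = c \<bullet> (transpose_mat U *\<^sub>v w)" if w: "w \<in> carrier_vec n" for w
    using transpose_vec_mult_scalar[OF UT w c] U by simp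
  have "(U *\<^sub>v c) \<bullet> (A *\<^sub>v (U *\<^sub>v c)) = c \<bullet> ((transpose_mat U * A * U) *\<^sub>v c)"
    using sw[of "A *\<^sub>v (U *\<^sub>v c)"] A U UT c by (simp add: assoc_mult_mat_vec[of _ n n _ n])
  also have "\<dots> = (\<Sum>i<n. c$i * (\<Sum>j<n. (if i = j then ds ! i else 0) * c$j))"
    using A U c ent by (auto simp: scalar_prod_def row_def atLeast0LessThan intro!: sum.cong)
  also have "\<dots> = (\<Sum>i<n. ds!i * (c$i)^2)"
  proof (intro sum.cong refl)
    fix i assume i: "i \<in> {..<n}"
    have "(\<Sum>j<n. (if i = j then ds ! i else 0) * c$j) = (\<Sum>j<n. if i = j then ds!i * c$j else 0)"
      by (intro sum.cong) auto
    also have "\<dots> = ds!i * c$i" using i by (simp add: sum.delta)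
    finally show "c$i * (\<Sum>j<n. (if i = j then ds ! i else 0) * c$j) = ds!i * (c$i)^2"
      by (simp add: power2_eq_square)
  qed
  finally show "(U *\<^sub>v c) \<bullet> (A *\<^sub>v (U *\<^sub>v c)) = (\<Sum>i<n. ds!i * (c$i)^2)" .
  have "(U *\<^sub>v c) \<bullet> (U *\<^sub>v c) = c \<bullet> ((transpose_mat U * U) *\<^sub>v c)"
    using sw[of "U *\<^sub>v c"] U UT c by (simp add: assoc_mult_mat_vec[of _ n n _ n])
  thus "(U *\<^sub>v c) \<bullet> (U *\<^sub>v c) = c \<bullet> c" unfolding UTU using c by simp
qed



lemma filter_count_sort: "length (filter P (sort ds)) = card {i. i < length ds \<and> P (ds!i)}"
proof -
  have "length (filter P (sort ds)) = length (filter P ds)"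
    by (metis filter_sort length_sort)
  thus ?thesis by (simp add: length_filter_conv_card)
qed

lemma two_small:
  fixes ds :: "real list"
  assumes "length ds \<ge> 2"
  shows "\<exists>i0 i1. i0 < length ds \<and> i1 < length ds \<and> i0 \<noteq> i1 \<and> ds!i0 \<le> sort ds!1 \<and> ds!i1 \<le> sort ds!1"
proof -
  let ?t = "sort ds ! 1"
  have "{0,1} \<subseteq> {i. i < length (sort ds) \<and> sort ds ! i \<le> ?t}"
    using assms sorted_nth_mono[of "sort ds" 0 1] by auto
  hence "card {0::nat,1} \<le> card {i. i < length (sort ds) \<and> sort ds ! i \<le> ?t}"
    by (intro card_mono) auto
  also have "\<dots> = card {i. i < length ds \<and> ds!i \<le> ?t}"
    using filter_count_sort[of "\<lambda>a. a \<le> ?t" "sort ds"] filter_count_sort[of "\<lambda>a. a \<le> ?t" ds] by (simp add: sorted_sort_id)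
  finally have c2: "2 \<le> card {i. i < length ds \<and> ds!i \<le> ?t}" by simp
  have cne: "card {i. i < length ds \<and> ds!i \<le> ?t} \<noteq> 0" using c2 by linarith
  have "{i. i < length ds \<and> ds!i \<le> ?t} \<noteq> {}" using cne by (rule contrapos_nn) simp
  then obtain i0 where i0: "i0 \<in> {i. i < length ds \<and> ds!i \<le> ?t}" by blast
  have "1 \<le> card ({i. i < length ds \<and> ds!i \<le> ?t} - {i0})" using c2 i0 by simp
  hence "card ({i. i < length ds \<and> ds!i \<le> ?t} - {i0}) \<noteq> 0" by linarith
  hence "{i. i < length ds \<and> ds!i \<le> ?t} - {i0} \<noteq> {}" by (rule contrapos_nn) simp
  then obtain i1 where "i1 \<in> {i. i < length ds \<and> ds!i \<le> ?t} - {i0}" by blast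
  thus ?thesis using i0 by blast
qed

lemma one_small:
  fixes ds :: "real list"
  assumes "length ds \<ge> 2"
  shows "\<exists>i0. \<forall>i<length ds. i \<noteq> i0 \<longrightarrow> sort ds!1 \<le> ds!i"
proof -
  let ?t = "sort ds ! 1"
  have "{i. i < length (sort ds) \<and> sort ds ! i < ?t} \<subseteq> {0}"
  proof
    fix i assume "i \<in> {i. i < length (sort ds) \<and> sort ds ! i < ?t}"
    hence i: "i < length ds" "sort ds ! i < ?t" by auto
    have "i = 0"
    proof (rule ccontr)
      assume "i \<noteq> 0"
      hence "?t \<le> sort ds ! i" using i sorted_nth_mono[of "sort ds" 1 i] by auto
      thus False using i by simp
    qed
    thus "i \<in> {0}" by simp
  qed
  hence "card {i. i < length (sort ds) \<and> sort ds ! i < ?t} \<le> card {0::nat}"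
    by (intro card_mono) simp_all
  hence "card {i. i < length (sort ds) \<and> sort ds ! i < ?t} \<le> 1" by simp
  moreover have "card {i. i < length (sort ds) \<and> sort ds ! i < ?t} = card {i. i < length ds \<and> ds!i < ?t}"
    using filter_count_sort[of "\<lambda>a. a < ?t" "sort ds"] filter_count_sort[of "\<lambda>a. a < ?t" ds] by (simp add: sorted_sort_id)
  ultimately have c: "card {i. i < length ds \<and> ds!i < ?t} \<le> 1" by simp
  show ?thesis
  proof (cases "{i. i < length ds \<and> ds!i < ?t} = {}")
    case True thus ?thesis by (intro exI[of _ 0]) force
  next
    case False
    then obtain i0 where i0: "i0 \<in> {i. i < length ds \<and> ds!i < ?t}" by blast
    have fin: "finite {i. i < length ds \<and> ds!i < ?t}" by simp
    have all: "\<forall>a\<in>{i. i < length ds \<and> ds!i < ?t}. \<forall>b\<in>{i. i < length ds \<and> ds!i < ?t}. a = b"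
      using card_le_Suc0_iff_eq[OF fin] c by simp
    show ?thesis
    proof (intro exI[of _ i0] allI impI)
      fix i assume "i < length ds" "i \<noteq> i0"
      show "?t \<le> ds!i"
      proof (rule ccontr)
        assume "\<not> ?t \<le> ds!i"
        hence "i \<in> {i. i < length ds \<and> ds!i < ?t}" using \<open>i < length ds\<close> by simp
        thus False using all i0 \<open>i \<noteq> i0\<close> by blast
      qed
    qed
  qed
qed



definition ones :: "nat \<Rightarrow> real vec" where "ones n = vec n (\<lambda>_. 1)"
lemma ones_carrier[simp]: "ones n \<in> carrier_vec n" unfolding ones_def by simp
lemma ones_dim[simp]: "dim_vec (ones n) = n" unfolding ones_def by simp
lemma ones_index[simp]: "i < n \<Longrightarrow> ones n $ i = 1" unfolding ones_def by simp

lemma smult_zero_vec': "(a::real) \<cdot>\<^sub>v 0\<^sub>v n = 0\<^sub>v n" by (rule eq_vecI) auto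

lemma sum_two_delta:
  fixes w :: "nat \<Rightarrow> real"
  assumes "i0 < n" "i1 < n" "i0 \<noteq> i1"
  shows "(\<Sum>i<n. (if i = i0 then a else if i = i1 then b else 0) * w i) = a * w i0 + b * w i1"
proof -
  have "(\<Sum>i<n. (if i = i0 then a else if i = i1 then b else 0) * w i)
      = (\<Sum>i<n. (if i = i0 then a * w i else 0) + (if i = i1 then b * w i else 0))"
    using assms by (intro sum.cong) auto
  also have "\<dots> = a * w i0 + b * w i1" using assms by (simp add: sum.distrib sum.delta)
  finally show ?thesis .
qed

lemma K2:
  fixes A U :: "real mat"
  assumes A: "A \<in> carrier_mat n n" and U: "U \<in> carrier_mat n n" and UTU: "transpose_mat U * U = 1\<^sub>m n"
    and ent: "\<forall>i<n. \<forall>j<n. (transpose_mat U * A * U) $$ (i,j) = (if i = j then ds ! i else 0)"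
    and len: "length ds = n" and n2: "n \<ge> 2"
    and H: "\<And>x. x \<in> carrier_vec n \<Longrightarrow> x \<noteq> 0\<^sub>v n \<Longrightarrow> x \<bullet> ones n = 0 \<Longrightarrow> s * (x \<bullet> x) \<le> x \<bullet> (A *\<^sub>v x)"
  shows "s \<le> sort ds ! 1"
proof -
  let ?t = "sort ds ! 1"
  obtain i0 i1 where ii: "i0 < n" "i1 < n" "i0 \<noteq> i1" "ds!i0 \<le> ?t" "ds!i1 \<le> ?t"
    using two_small[of ds] len n2 by auto
  have UT: "transpose_mat U \<in> carrier_mat n n" using U by simp
  define w where "w = transpose_mat U *\<^sub>v ones n"
  define \<alpha> where "\<alpha> = (if w$i1 = 0 \<and> w$i0 = 0 then 1 else w$i1)"
  define \<beta> where "\<beta> = (if w$i1 = 0 \<and> w$i0 = 0 then 0 else - w$i0)"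
  have ab: "\<alpha> * w$i0 + \<beta> * w$i1 = 0" unfolding \<alpha>_def \<beta>_def by auto
  have ab0: "\<alpha> \<noteq> 0 \<or> \<beta> \<noteq> 0" unfolding \<alpha>_def \<beta>_def by auto
  define c where "c = vec n (\<lambda>i. if i = i0 then \<alpha> else if i = i1 then \<beta> else 0)"
  have c: "c \<in> carrier_vec n" unfolding c_def by simp
  have c0: "c \<noteq> 0\<^sub>v n"
  proof
    assume "c = 0\<^sub>v n"
    hence "c $ i0 = 0" "c $ i1 = 0" using ii by auto
    thus False using ab0 ii unfolding c_def by auto
  qed
  define y where "y = U *\<^sub>v c"
  have y: "y \<in> carrier_vec n" using U c y_def by simp
  have yy: "y \<bullet> y = c \<bullet> c" using quad_U(2)[OF A U UTU ent c] y_def by simp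
  have yAy: "y \<bullet> (A *\<^sub>v y) = (\<Sum>i<n. ds!i * (c$i)^2)" using quad_U(1)[OF A U UTU ent c] y_def by simp
  have "y \<bullet> ones n = c \<bullet> w"
    using transpose_vec_mult_scalar[OF UT ones_carrier[of n] c] U unfolding y_def w_def by simp
  also have "c \<bullet> w = (\<Sum>i<n. (if i = i0 then \<alpha> else if i = i1 then \<beta> else 0) * w$i)"
    unfolding c_def using w_def UT by (simp add: scalar_prod_def atLeast0LessThan)
  also have "\<dots> = \<alpha> * w$i0 + \<beta> * w$i1" by (rule sum_two_delta[OF ii(1-3)])
  finally have y1: "y \<bullet> ones n = 0" using ab by simp
  have cc: "c \<bullet> c > 0" using real_sq_pos[OF c c0] .
  have y0: "y \<noteq> 0\<^sub>v n" using yy cc by auto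
  have "s * (c \<bullet> c) \<le> (\<Sum>i<n. ds!i * (c$i)^2)" using H[OF y y0 y1] yy yAy by simp
  also have "\<dots> \<le> (\<Sum>i<n. ?t * (c$i)^2)"
  proof (rule sum_mono)
    fix i assume i: "i \<in> {..<n}"
    show "ds!i * (c$i)^2 \<le> ?t * (c$i)^2"
    proof (cases "i = i0 \<or> i = i1")
      case True thus ?thesis using ii by (auto intro: mult_right_mono)
    next
      case False thus ?thesis using i unfolding c_def by simp
    qed
  qed
  also have "\<dots> = ?t * (c \<bullet> c)" using c
    by (simp add: scalar_prod_def sum_distrib_left power2_eq_square atLeast0LessThan)
  finally show ?thesis using cc by simp
qed

lemma K1:
  fixes A U :: "real mat"
  assumes A: "A \<in> carrier_mat n n" and U: "U \<in> carrier_mat n n" and UTU: "transpose_mat U * U = 1\<^sub>m n"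
    and UUT: "U * transpose_mat U = 1\<^sub>m n"
    and ent: "\<forall>i<n. \<forall>j<n. (transpose_mat U * A * U) $$ (i,j) = (if i = j then ds ! i else 0)"
    and len: "length ds = n" and n2: "n \<ge> 2"
    and sym: "transpose_mat A = A" and A1: "A *\<^sub>v ones n = 0\<^sub>v n"
    and psd: "\<And>x. x \<in> carrier_vec n \<Longrightarrow> 0 \<le> x \<bullet> (A *\<^sub>v x)"
    and x: "x \<in> carrier_vec n" and x1: "x \<bullet> ones n = 0"
  shows "sort ds ! 1 * (x \<bullet> x) \<le> x \<bullet> (A *\<^sub>v x)"
proof -
  let ?t = "sort ds ! 1"
  obtain i0 where i0: "\<forall>i<n. i \<noteq> i0 \<longrightarrow> ?t \<le> ds!i" using one_small[of ds] len n2 by auto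
  have UT: "transpose_mat U \<in> carrier_mat n n" using U by simp
  have one: "ones n \<in> carrier_vec n" by simp
  define p where "p = (transpose_mat U *\<^sub>v ones n) $ i0"
  define q where "q = (transpose_mat U *\<^sub>v x) $ i0"
  define \<alpha> where "\<alpha> = (if p = 0 \<and> q = 0 then 0 else q)"
  define \<beta> where "\<beta> = (if p = 0 \<and> q = 0 then 1 else - p)"
  have ab: "\<alpha> * p + \<beta> * q = 0" unfolding \<alpha>_def \<beta>_def by auto
  have ab0: "\<alpha> \<noteq> 0 \<or> \<beta> \<noteq> 0" unfolding \<alpha>_def \<beta>_def by auto
  define y where "y = \<alpha> \<cdot>\<^sub>v ones n + \<beta> \<cdot>\<^sub>v x"
  have y: "y \<in> carrier_vec n" unfolding y_def using x by simp
  define c where "c = transpose_mat U *\<^sub>v y"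
  have c: "c \<in> carrier_vec n" unfolding c_def using UT y by simp
  have yc: "y = U *\<^sub>v c" unfolding c_def using U UT y UUT
    by (simp add: assoc_mult_mat_vec[symmetric, of _ n n _ n])
  have ci0: "c $ i0 = 0" if "i0 < n"
  proof -
    have "c = \<alpha> \<cdot>\<^sub>v (transpose_mat U *\<^sub>v ones n) + \<beta> \<cdot>\<^sub>v (transpose_mat U *\<^sub>v x)"
      unfolding c_def y_def using UT x
      by (simp add: mult_add_distrib_mat_vec[of _ n n] mult_mat_vec[of _ n n])
    hence "c $ i0 = \<alpha> * p + \<beta> * q" unfolding p_def q_def using that UT by simp
    thus ?thesis using ab by simp
  qed
  have Ax: "A *\<^sub>v x \<in> carrier_vec n" using A x by simp
  have Ay: "A *\<^sub>v y = \<beta> \<cdot>\<^sub>v (A *\<^sub>v x)"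
    unfolding y_def using A x A1 Ax by (simp add: mult_add_distrib_mat_vec[of _ n n] mult_mat_vec[of _ n n] smult_zero_vec')
  have oAx: "ones n \<bullet> (A *\<^sub>v x) = 0"
    using transpose_vec_mult_scalar[OF A x one] sym A1 x by simp
  have yAy: "y \<bullet> (A *\<^sub>v y) = \<beta>^2 * (x \<bullet> (A *\<^sub>v x))"
    unfolding Ay using x Ax oAx
    by (simp add: y_def add_scalar_prod_distrib[of _ n] smult_scalar_prod_distrib[of _ n] scalar_prod_smult_distrib[of _ n] power2_eq_square)
  have x1': "ones n \<bullet> x = 0" using x1 comm_scalar_prod[OF x one] by simp
  have oo: "ones n \<bullet> ones n = (real n)" by (simp add: scalar_prod_def)
  have yy: "y \<bullet> y = \<alpha>^2 * real n + \<beta>^2 * (x \<bullet> x)"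
    unfolding y_def using x x1 x1' oo
    by (simp add: add_scalar_prod_distrib[of _ n] scalar_prod_add_distrib[of _ n] smult_scalar_prod_distrib[of _ n] scalar_prod_smult_distrib[of _ n] power2_eq_square)
  have "?t * (y \<bullet> y) = ?t * (c \<bullet> c)" using quad_U(2)[OF A U UTU ent c] yc by simp
  also have "\<dots> = (\<Sum>i<n. ?t * (c$i)^2)" using c
    by (simp add: scalar_prod_def sum_distrib_left power2_eq_square atLeast0LessThan)
  also have "\<dots> \<le> (\<Sum>i<n. ds!i * (c$i)^2)"
  proof (rule sum_mono)
    fix i assume i: "i \<in> {..<n}"
    show "?t * (c$i)^2 \<le> ds!i * (c$i)^2"
    proof (cases "i = i0")
      case True thus ?thesis using ci0 i by simp
    next
      case False thus ?thesis using i i0 by (auto intro: mult_right_mono)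
    qed
  qed
  also have "\<dots> = y \<bullet> (A *\<^sub>v y)" using quad_U(1)[OF A U UTU ent c] yc by simp
  finally have main: "?t * (\<alpha>^2 * real n + \<beta>^2 * (x \<bullet> x)) \<le> \<beta>^2 * (x \<bullet> (A *\<^sub>v x))"
    using yy yAy by simp
  have X: "x \<bullet> x \<ge> 0" using conjugate_square_ge_0_vec[of x] by (simp add: real_cscalar)
  have Q: "x \<bullet> (A *\<^sub>v x) \<ge> 0" using psd[OF x] .
  show ?thesis
  proof (cases "?t \<le> 0")
    case True thus ?thesis using X Q by (meson mult_nonpos_nonneg order_trans)
  next
    case False
    hence t: "?t > 0" by simp
    have n0: "real n > 0" using n2 by simp
    show ?thesis
    proof (cases "\<beta> = 0")
      case True
      hence "\<alpha> \<noteq> 0" using ab0 by simp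
      hence "?t * (\<alpha>^2 * real n) > 0" using t n0 by simp
      thus ?thesis using main True by simp
    next
      case False
      have "?t * (\<beta>^2 * (x \<bullet> x)) \<le> ?t * (\<alpha>^2 * real n + \<beta>^2 * (x \<bullet> x))"
        using t n0 by (intro mult_left_mono) auto
      hence "\<beta>^2 * (?t * (x \<bullet> x)) \<le> \<beta>^2 * (x \<bullet> (A *\<^sub>v x))" using main by (simp add: algebra_simps)
      thus ?thesis using False by simp
    qed
  qed
qed



definition qf :: "nat \<Rightarrow> (nat \<Rightarrow> nat \<Rightarrow> bool) \<Rightarrow> (nat \<Rightarrow> real) \<Rightarrow> real" where
  "qf n E f = (\<Sum>i<n. \<Sum>j<n. if E i j then (f i - f j)^2 else 0)"

lemma lap_carrier: "laplacian n E \<in> carrier_mat n n" unfolding laplacian_def by simp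

lemma lap_sym: assumes "simple_graph n E" shows "transpose_mat (laplacian n E) = laplacian n E"
  using assms unfolding simple_graph_def laplacian_def by (intro eq_matI) auto

lemma lap_row:
  assumes sg: "simple_graph n E" and i: "i < n"
  shows "(laplacian n E *\<^sub>v vec n f) $ i = (\<Sum>j<n. if E i j then f i - f j else 0)"
proof -
  have irr: "\<not> E i i" using sg i unfolding simple_graph_def by auto
  have deg: "real (card {k. k < n \<and> E i k}) = (\<Sum>j<n. if E i j then 1 else 0)"
  proof -
    have "{k. k < n \<and> E i k} = {..<n} \<inter> {j. E i j}" by auto
    moreover have "(\<Sum>j\<in>{..<n} \<inter> {j. E i j}. (1::real)) = (\<Sum>j<n. if E i j then 1 else 0)"
      by (subst sum.inter_restrict) auto
    ultimately show ?thesis by simp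
  qed
  have "(laplacian n E *\<^sub>v vec n f) $ i = (\<Sum>j<n. (if i = j then real (card {k. k < n \<and> E i k})
                                       else if E i j then -1 else 0) * f j)"
    using i by (simp add: laplacian_def scalar_prod_def row_def atLeast0LessThan)
  also have "\<dots> = (\<Sum>j<n. (if i = j then real (card {k. k < n \<and> E i k}) * f i else 0) + (if E i j then - f j else 0))"
    using irr by (intro sum.cong) auto
  also have "\<dots> = real (card {k. k < n \<and> E i k}) * f i + (\<Sum>j<n. if E i j then - f j else 0)"
    using i by (simp add: sum.distrib sum.delta)
  also have "\<dots> = (\<Sum>j<n. if E i j then f i - f j else 0)"
  proof -
    have "(\<Sum>j<n. if E i j then f i - f j else 0) = (\<Sum>j<n. (if E i j then 1 else 0) * f i + (if E i j then - f j else 0))"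
      by (intro sum.cong) auto
    also have "\<dots> = (\<Sum>j<n. if E i j then 1 else 0) * f i + (\<Sum>j<n. if E i j then - f j else 0)"
      by (simp add: sum.distrib sum_distrib_right)
    finally show ?thesis unfolding deg by simp
  qed
  finally show ?thesis .
qed

lemma lap_quad:
  assumes sg: "simple_graph n E"
  shows "vec n f \<bullet> (laplacian n E *\<^sub>v vec n f) = qf n E f / 2"
proof -
  have sym: "E i j = E j i" if "i < n" "j < n" for i j using sg that unfolding simple_graph_def by auto
  define S1 where "S1 = (\<Sum>i<n. \<Sum>j<n. if E i j then f i * (f i - f j) else 0)"
  have "vec n f \<bullet> (laplacian n E *\<^sub>v vec n f) = (\<Sum>i<n. f i * (\<Sum>j<n. if E i j then f i - f j else 0))"
    using lap_row[OF sg] lap_carrier[of n E] by (simp add: scalar_prod_def atLeast0LessThan)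
  also have "\<dots> = S1" unfolding S1_def sum_distrib_left by (intro sum.cong refl) auto
  finally have e1: "vec n f \<bullet> (laplacian n E *\<^sub>v vec n f) = S1" .
  have "S1 = (\<Sum>j<n. \<Sum>i<n. if E i j then f i * (f i - f j) else 0)" unfolding S1_def by (rule sum.swap)
  also have "\<dots> = (\<Sum>j<n. \<Sum>i<n. if E j i then f i * (f i - f j) else 0)"
    by (intro sum.cong refl) (auto simp: sym)
  finally have e2: "S1 = (\<Sum>i<n. \<Sum>j<n. if E i j then f j * (f j - f i) else 0)" .
  have "2 * S1 = (\<Sum>i<n. \<Sum>j<n. (if E i j then f i * (f i - f j) else 0) + (if E i j then f j * (f j - f i) else 0))"
    using e2 unfolding S1_def by (simp add: sum.distrib)
  also have "\<dots> = qf n E f" unfolding qf_def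
    by (intro sum.cong refl) (auto simp: power2_eq_square algebra_simps)
  finally show ?thesis using e1 by simp
qed

lemma lap_ones: assumes sg: "simple_graph n E" shows "laplacian n E *\<^sub>v ones n = 0\<^sub>v n"
proof -
  have "ones n = vec n (\<lambda>_. 1)" unfolding ones_def ..
  thus ?thesis using lap_row[OF sg, of _ "\<lambda>_. 1"] lap_carrier[of n E] by (intro eq_vecI) auto
qed

lemma qf_nonneg: "qf n E f \<ge> 0" unfolding qf_def by (intro sum_nonneg) auto

lemma sq_diff_sum:
  fixes f :: "nat \<Rightarrow> real" assumes "finite R"
  shows "(\<Sum>i\<in>R. \<Sum>j\<in>R. (f i - f j)^2) = 2 * real (card R) * (\<Sum>i\<in>R. (f i)^2) - 2 * (\<Sum>i\<in>R. f i)^2"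
proof -
  have "(\<Sum>i\<in>R. \<Sum>j\<in>R. (f i - f j)^2) = (\<Sum>i\<in>R. \<Sum>j\<in>R. (f i)^2 + (f j)^2 - 2 * (f i * f j))"
    by (intro sum.cong refl) (simp add: power2_eq_square algebra_simps)
  also have "\<dots> = (\<Sum>i\<in>R. real (card R) * (f i)^2 + (\<Sum>j\<in>R. (f j)^2) - 2 * (f i * (\<Sum>j\<in>R. f j)))"
    by (simp add: sum.distrib sum_subtractf sum_distrib_left)
  also have "\<dots> = (\<Sum>i\<in>R. real (card R) * (f i)^2) + (\<Sum>i\<in>R. (\<Sum>j\<in>R. (f j)^2)) - (\<Sum>i\<in>R. 2 * (f i * (\<Sum>j\<in>R. f j)))"
    by (simp add: sum.distrib sum_subtractf)
  also have "(\<Sum>i\<in>R. real (card R) * (f i)^2) = real (card R) * (\<Sum>i\<in>R. (f i)^2)" by (simp add: sum_distrib_left)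
  also have "(\<Sum>i\<in>R. (\<Sum>j\<in>R. (f j)^2)) = real (card R) * (\<Sum>i\<in>R. (f i)^2)" by simp
  also have "(\<Sum>i\<in>R. 2 * (f i * (\<Sum>j\<in>R. f j))) = 2 * ((\<Sum>i\<in>R. f i) * (\<Sum>j\<in>R. f j))"
    by (simp add: sum_distrib_left[symmetric] sum_distrib_right[symmetric] mult.assoc)
  finally show ?thesis by (simp add: power2_eq_square)
qed



lemma reach_refl: "u \<in> U \<Longrightarrow> reach_in E U u u" unfolding reach_in_def by simp

lemma reach_step: "reach_in E U u w \<Longrightarrow> w' \<in> U \<Longrightarrow> E w w' \<Longrightarrow> reach_in E U u w'"
  unfolding reach_in_def by (auto intro: rtrancl_into_rtrancl)

lemma reach_edge: "u \<in> U \<Longrightarrow> w \<in> U \<Longrightarrow> E u w \<Longrightarrow> reach_in E U u w"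
  using reach_step reach_refl by metis

lemma hsum: fixes c :: real and S :: "nat set" assumes "S \<subseteq> {..<n}"
  shows "(\<Sum>j<n. if j \<in> S then c else 0) = c * real (card S)"
proof -
  have "(\<Sum>j\<in>{..<n} \<inter> S. c) = (\<Sum>j<n. if j \<in> S then c else 0)"
    by (subst sum.inter_restrict[of "{..<n}"]) auto
  moreover have "{..<n} \<inter> S = S" using assms by auto
  ultimately show ?thesis by (simp add: mult.commute)
qed

lemma dsum_le: fixes F G :: "nat \<Rightarrow> nat \<Rightarrow> real"
  assumes "\<And>i j. i < n \<Longrightarrow> j < n \<Longrightarrow> F i j \<le> G i j"
  shows "(\<Sum>i<n. \<Sum>j<n. F i j) \<le> (\<Sum>i<n. \<Sum>j<n. G i j)"
  using assms by (intro sum_mono) auto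

lemma dsum_less: fixes F G :: "nat \<Rightarrow> nat \<Rightarrow> real"
  assumes "\<And>i j. i < n \<Longrightarrow> j < n \<Longrightarrow> F i j \<le> G i j" and "i0 < n" "j0 < n" "F i0 j0 < G i0 j0"
  shows "(\<Sum>i<n. \<Sum>j<n. F i j) < (\<Sum>i<n. \<Sum>j<n. G i j)"
proof (rule sum_strict_mono_ex1)
  show "\<forall>i\<in>{..<n}. (\<Sum>j<n. F i j) \<le> (\<Sum>j<n. G i j)" using assms(1) by (auto intro: sum_mono)
  show "\<exists>i\<in>{..<n}. (\<Sum>j<n. F i j) < (\<Sum>j<n. G i j)"
  proof (intro bexI[of _ i0])
    show "(\<Sum>j<n. F i0 j) < (\<Sum>j<n. G i0 j)"
      by (rule sum_strict_mono_ex1) (use assms in auto)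
  qed (use assms in auto)
qed simp

lemma G1:
  assumes sg: "simple_graph n E" and sep: "separator n E S"
    and P1: "\<And>f. (\<Sum>i<n. f i) = 0 \<Longrightarrow> a * (\<Sum>i<n. (f i)^2) \<le> qf n E f / 2"
  shows "a \<le> real (card S)" and "(\<exists>i\<in>S. \<exists>j<n. j \<notin> S \<and> \<not> E i j) \<Longrightarrow> a < real (card S)"
proof -
  have symE: "E i j = E j i" if "i < n" "j < n" for i j using sg that unfolding simple_graph_def by auto
  have Sn: "S \<subseteq> {..<n}" using sep unfolding separator_def by auto
  obtain u v where uv: "u \<in> {..<n} - S" "v \<in> {..<n} - S" "\<not> reach_in E ({..<n} - S) u v"
    using sep unfolding separator_def by auto
  define R where "R = {..<n} - S"
  define C where "C = {w. reach_in E R u w}"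
  define D where "D = R - C"
  have CR: "C \<subseteq> R"
  proof
    fix w assume "w \<in> C" thus "w \<in> R" unfolding C_def reach_in_def by simp
  qed
  have uR: "u \<in> R" "v \<in> R" using uv unfolding R_def by simp_all
  have uC: "u \<in> C" unfolding C_def using reach_refl[OF uR(1), of E] by simp
  have vD: "v \<in> D" unfolding D_def C_def using uv(3) uR unfolding R_def by simp
  have Rn: "R \<subseteq> {..<n}" unfolding R_def by (rule Diff_subset)
  have Cn: "C \<subseteq> {..<n}" "D \<subseteq> {..<n}" using CR Rn unfolding D_def by blast+
  have fC: "finite C" "finite D" using finite_subset[OF Cn(1)] finite_subset[OF Cn(2)] by simp_all
  define cC where "cC = real (card C)"
  define cD where "cD = real (card D)"
  have cpos: "cC > 0" "cD > 0" unfolding cC_def cD_def using fC uC vD by (auto simp: card_gt_0_iff)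
  define f where "f w = (if w \<in> C then cD else if w \<in> D then - cC else 0)" for w
  have CD: "C \<inter> D = {}" unfolding D_def by auto
  have fsplit: "f w = (if w \<in> C then cD else 0) + (if w \<in> D then - cC else 0)" for w
    unfolding f_def using CD by auto
  have sum0: "(\<Sum>i<n. f i) = 0"
    unfolding fsplit by (simp add: sum.distrib hsum[OF Cn(1)] hsum[OF Cn(2)] cC_def cD_def)
  have fS: "f i = 0" if "i \<in> S" for i using that CR unfolding f_def D_def R_def by auto
  have fR: "f i \<noteq> 0" if "i \<in> R" for i using that cpos unfolding f_def D_def by auto
  define F where "F = (\<Sum>i<n. (f i)^2)"
  have Fpos: "F > 0" unfolding F_def
    by (rule sum_pos2[of _ u]) (use uv uC cpos in \<open>auto simp: f_def\<close>)
  define g where "g i j = (if i \<in> S then (f j)^2 else 0) + (if j \<in> S then (f i)^2 else 0)" for i j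
  have trm: "(if E i j then (f i - f j)^2 else 0) \<le> g i j" if ij: "i < n" "j < n" for i j
  proof (cases "i \<in> S")
    case True thus ?thesis unfolding g_def using fS[OF True] by auto
  next
    case iS: False
    show ?thesis
    proof (cases "j \<in> S")
      case True thus ?thesis unfolding g_def using fS[OF True] by auto
    next
      case jS: False
      have iR: "i \<in> R" "j \<in> R" unfolding R_def using ij iS jS by auto
      show ?thesis
      proof (cases "E i j")
        case False thus ?thesis unfolding g_def by simp
      next
        case True
        have "i \<in> C \<longleftrightarrow> j \<in> C"
        proof
          assume "i \<in> C"
          hence "reach_in E R u i" unfolding C_def by simp
          from reach_step[OF this iR(2) True] show "j \<in> C" unfolding C_def by simp
        next
          assume "j \<in> C"
          hence "reach_in E R u j" unfolding C_def by simp
          moreover have "E j i" using True symE ij by simp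
          ultimately have "reach_in E R u i" using reach_step iR(1) by metis
          thus "i \<in> C" unfolding C_def by simp
        qed
        hence "f i = f j" unfolding f_def D_def using iR by auto
        thus ?thesis unfolding g_def by simp
      qed
    qed
  qed
  have gsum: "(\<Sum>i<n. \<Sum>j<n. g i j) = 2 * real (card S) * F"
  proof -
    have "(\<Sum>i<n. \<Sum>j<n. g i j) = (\<Sum>i<n. (if i \<in> S then F else 0) + (f i)^2 * real (card S))"
      unfolding g_def F_def proof (intro sum.cong refl)
      fix i
      show "(\<Sum>j<n. (if i \<in> S then (f j)\<^sup>2 else 0) + (if j \<in> S then (f i)\<^sup>2 else 0)) =
         (if i \<in> S then \<Sum>i<n. (f i)\<^sup>2 else 0) + (f i)\<^sup>2 * real (card S)"
        by (cases "i \<in> S") (simp_all add: sum.distrib hsum[OF Sn])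
    qed
    also have "(\<Sum>i<n. (f i)^2 * real (card S)) = F * real (card S)" unfolding F_def by (simp add: sum_distrib_right)
    hence "(\<Sum>i<n. (if i \<in> S then F else 0) + (f i)^2 * real (card S)) = F * real (card S) + F * real (card S)"
      by (simp add: sum.distrib hsum[OF Sn])
    also have "\<dots> = F * real (card S) + real (card S) * F" by simp
    finally show ?thesis by simp
  qed
  have "qf n E f \<le> 2 * real (card S) * F" unfolding qf_def gsum[symmetric] by (rule dsum_le) (rule trm)
  hence "a * F \<le> real (card S) * F" using P1[OF sum0] unfolding F_def by simp
  thus "a \<le> real (card S)" using Fpos by simp
  assume "\<exists>i\<in>S. \<exists>j<n. j \<notin> S \<and> \<not> E i j"
  then obtain i0 j0 where ij0: "i0 \<in> S" "j0 < n" "j0 \<notin> S" "\<not> E i0 j0" by blast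
  have i0n: "i0 < n" using ij0 Sn by auto
  have "(if E i0 j0 then (f i0 - f j0)^2 else 0) < g i0 j0"
    using ij0 fR[of j0] unfolding g_def R_def by simp
  hence "qf n E f < 2 * real (card S) * F" unfolding qf_def gsum[symmetric]
    by (intro dsum_less[OF trm i0n ij0(2)]) auto
  hence "a * F < real (card S) * F" using P1[OF sum0] unfolding F_def by simp
  thus "a < real (card S)" using Fpos by (simp add: mult_less_cancel_right)
qed

lemma G2:
  assumes sg: "simple_graph n E" and S: "S \<subseteq> {..<n}" and univ: "\<forall>v\<in>S. universal_vertex n E v"
    and f0: "(\<Sum>i<n. f i) = 0"
  shows "real (card S) * (\<Sum>i<n. (f i)^2) \<le> qf n E f / 2"
proof -
  have symE: "E i j = E j i" if "i < n" "j < n" for i j using sg that unfolding simple_graph_def by auto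
  define R where "R = {..<n} - S"
  define T where "T i j = (f i - f j)^2" for i j
  define F where "F = (\<Sum>i<n. (f i)^2)"
  have trm: "(if i \<in> S \<or> j \<in> S then T i j else 0) \<le> (if E i j then (f i - f j)^2 else 0)"
    if ij: "i < n" "j < n" for i j
  proof (cases "i = j")
    case True thus ?thesis unfolding T_def by simp
  next
    case False
    have "i \<in> S \<or> j \<in> S \<Longrightarrow> E i j" using univ ij False symE unfolding universal_vertex_def by metis
    thus ?thesis unfolding T_def by auto
  qed
  have split: "(\<Sum>i<n. \<Sum>j<n. T i j) = (\<Sum>i<n. \<Sum>j<n. if i \<in> S \<or> j \<in> S then T i j else 0)
      + (\<Sum>i<n. \<Sum>j<n. if i \<in> R \<and> j \<in> R then T i j else 0)"
  proof -
    have "(\<Sum>i<n. \<Sum>j<n. T i j) = (\<Sum>i<n. \<Sum>j<n. (if i \<in> S \<or> j \<in> S then T i j else 0) + (if i \<in> R \<and> j \<in> R then T i j else 0))"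
      by (intro sum.cong refl) (auto simp: R_def)
    thus ?thesis by (simp add: sum.distrib)
  qed
  have RR: "(\<Sum>i<n. \<Sum>j<n. if i \<in> R \<and> j \<in> R then T i j else 0) = (\<Sum>i\<in>R. \<Sum>j\<in>R. T i j)"
  proof -
    have Rs: "R \<subseteq> {..<n}" unfolding R_def by auto
    have "(\<Sum>i<n. \<Sum>j<n. if i \<in> R \<and> j \<in> R then T i j else 0) = (\<Sum>i<n. if i \<in> R then (\<Sum>j\<in>R. T i j) else 0)"
    proof (intro sum.cong refl)
      fix i
      have "(\<Sum>j\<in>{..<n} \<inter> R. T i j) = (\<Sum>j<n. if j \<in> R then T i j else 0)"
        by (subst sum.inter_restrict) auto
      moreover have "{..<n} \<inter> R = R" using Rs by auto
      ultimately show "(\<Sum>j<n. if i \<in> R \<and> j \<in> R then T i j else 0) = (if i \<in> R then (\<Sum>j\<in>R. T i j) else 0)"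
        by auto
    qed
    also have "\<dots> = (\<Sum>i\<in>{..<n} \<inter> R. (\<Sum>j\<in>R. T i j))" by (subst sum.inter_restrict) auto
    also have "{..<n} \<inter> R = R" using Rs by auto
    finally show ?thesis .
  qed
  have finR: "finite R" unfolding R_def by simp
  have all: "(\<Sum>i<n. \<Sum>j<n. T i j) = 2 * real n * F"
    using sq_diff_sum[of "{..<n}" f] f0 unfolding T_def F_def by simp
  have Rb: "(\<Sum>i\<in>R. \<Sum>j\<in>R. T i j) \<le> 2 * real (card R) * F"
  proof -
    have "(\<Sum>i\<in>R. \<Sum>j\<in>R. T i j) \<le> 2 * real (card R) * (\<Sum>i\<in>R. (f i)^2)"
      using sq_diff_sum[OF finR, of f] unfolding T_def by simp
    also have "(\<Sum>i\<in>R. (f i)^2) \<le> F" unfolding F_def R_def by (intro sum_mono2) auto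
    hence "2 * real (card R) * (\<Sum>i\<in>R. (f i)^2) \<le> 2 * real (card R) * F" by (intro mult_left_mono) auto
    finally show ?thesis .
  qed
  have cR: "real (card R) = real n - real (card S)"
  proof -
    have "card R = n - card S" unfolding R_def using S by (simp add: card_Diff_subset finite_subset)
    moreover have "card S \<le> n" using S card_mono[of "{..<n}" S] by simp
    ultimately show ?thesis by simp
  qed
  have "(\<Sum>i<n. \<Sum>j<n. if i \<in> S \<or> j \<in> S then T i j else 0) \<le> qf n E f"
    unfolding qf_def by (rule dsum_le) (rule trm)
  moreover have "(\<Sum>i<n. \<Sum>j<n. if i \<in> S \<or> j \<in> S then T i j else 0) \<ge> 2 * real (card S) * F"
    using split all Rb RR cR by (simp add: algebra_simps)
  ultimately show ?thesis unfolding F_def by simp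
qed



lemma four_cases: "k < (4::nat) \<Longrightarrow> k = 0 \<or> k = 1 \<or> k = 2 \<or> k = 3" by auto

lemma cycle4_no_chord:
  assumes "\<not> E a c" "\<not> E c a" "\<not> E b d" "\<not> E d b"
  shows "\<not> has_chord E [a,b,c,d]"
  unfolding has_chord_def
proof clarify
  fix i j assume ij: "i < length [a,b,c,d]" "j < length [a,b,c,d]" "i \<noteq> j"
    "j \<noteq> (i + 1) mod length [a,b,c,d]" "i \<noteq> (j + 1) mod length [a,b,c,d]" "E ([a,b,c,d] ! i) ([a,b,c,d] ! j)"
  have "i < 4" "j < 4" using ij by auto
  from four_cases[OF this(1)] four_cases[OF this(2)] show False
    using ij assms by (elim disjE) simp_all
qed

lemma cycle4:
  assumes "E a b" "E b c" "E c d" "E d a" "distinct [a,b,c,d]" "set [a,b,c,d] \<subseteq> {..<n}"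
  shows "is_cycle n E [a,b,c,d]"
  unfolding is_cycle_def
proof (intro conjI allI impI)
  fix k assume "k < length [a,b,c,d]"
  hence "k < 4" by simp
  from four_cases[OF this] show "E ([a,b,c,d] ! k) ([a,b,c,d] ! ((k + 1) mod length [a,b,c,d]))"
    using assms by (elim disjE) simp_all
qed (use assms in auto)

theorem theorem2:
  fixes n :: nat and E :: "nat \<Rightarrow> nat \<Rightarrow> bool"
  assumes "simple_graph n E" and "connected_graph n E" and "chordal n E"
    and "\<not> complete_graph n E"
  shows "real (vertex_connectivity n E) = algebraic_connectivity n E \<longleftrightarrow>
    (\<exists>S. minimal_separator n E S \<and> (\<forall>v\<in>S. universal_vertex n E v))"
proof -
  note sg = assms(1)
  have symE: "E i j = E j i" if "i < n" "j < n" for i j using sg that unfolding simple_graph_def by auto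
  have irr: "\<not> E i i" if "i < n" for i using sg that unfolding simple_graph_def by auto
  obtain u0 v0 where uv0: "u0 < n" "v0 < n" "u0 \<noteq> v0" "\<not> E u0 v0"
    using assms(4) unfolding complete_graph_def by auto
  have n2: "n \<ge> 2" using uv0 by linarith
  let ?L = "laplacian n E"
  obtain U ds where Ud: "U \<in> carrier_mat n n" "transpose_mat U * U = 1\<^sub>m n" "U * transpose_mat U = 1\<^sub>m n"
     "length ds = n"
     "\<forall>i<n. \<forall>j<n. (transpose_mat U * ?L * U) $$ (i,j) = (if i = j then ds ! i else 0)"
     "char_poly ?L = (\<Prod>a\<leftarrow>ds. [:-a,1:])"
    using sym_eigen_decomp[OF lap_carrier lap_sym[OF sg]] by blast
  define a where "a = sort ds ! 1"
  have ac: "algebraic_connectivity n E = a"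
    unfolding algebraic_connectivity_def laplacian_eigenvalues_def Ud(6) a_def
    using sort_unique_prod[of ds] by simp
  have vecx: "x = vec n (\<lambda>i. x $ i)" if "x \<in> carrier_vec n" for x :: "real vec"
    by (rule eq_vecI) (use that in auto)
  have dot1: "vec n f \<bullet> ones n = (\<Sum>i<n. f i)" for f :: "nat \<Rightarrow> real"
    by (simp add: scalar_prod_def atLeast0LessThan)
  have dotx: "vec n f \<bullet> vec n f = (\<Sum>i<n. (f i)^2)" for f :: "nat \<Rightarrow> real"
    by (simp add: scalar_prod_def atLeast0LessThan power2_eq_square)
  have psd: "0 \<le> x \<bullet> (?L *\<^sub>v x)" if x: "x \<in> carrier_vec n" for x
    using lap_quad[OF sg, of "\<lambda>i. x $ i"] qf_nonneg[of n E "\<lambda>i. x $ i"] vecx[OF x] by simp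
  have P1: "a * (\<Sum>i<n. (f i)^2) \<le> qf n E f / 2" if f: "(\<Sum>i<n. f i) = 0" for f
  proof -
    have "a * (vec n f \<bullet> vec n f) \<le> vec n f \<bullet> (?L *\<^sub>v vec n f)"
      unfolding a_def
      by (rule K1[OF lap_carrier Ud(1,2,3,5,4) n2 lap_sym[OF sg] lap_ones[OF sg] psd]) (use f dot1 in auto)
    thus ?thesis using dotx lap_quad[OF sg] by simp
  qed
  have P2: "s \<le> a" if H: "\<And>f. (\<Sum>i<n. f i) = 0 \<Longrightarrow> s * (\<Sum>i<n. (f i)^2) \<le> qf n E f / 2" for s
    unfolding a_def
  proof (rule K2[OF lap_carrier Ud(1,2,5,4) n2])
    fix x :: "real vec" assume x: "x \<in> carrier_vec n" "x \<noteq> 0\<^sub>v n" "x \<bullet> ones n = 0"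
    have "(\<Sum>i<n. x $ i) = 0" using x(3) dot1[of "\<lambda>i. x $ i"] vecx[OF x(1)] by simp
    from H[OF this] show "s * (x \<bullet> x) \<le> x \<bullet> (?L *\<^sub>v x)"
      using dotx[of "\<lambda>i. x $ i"] lap_quad[OF sg, of "\<lambda>i. x $ i"] vecx[OF x(1)] by simp
  qed
  define K where "K = {card S | S. separator n E S}"
  define S0 where "S0 = {..<n} - {u0, v0}"
  have S0sep: "separator n E S0"
  proof -
    have rest: "{..<n} - S0 = {u0, v0}" unfolding S0_def using uv0 by auto
    have rel: "{(x, y). x \<in> {u0, v0} \<and> y \<in> {u0, v0} \<and> E x y} = {}"
      using uv0 irr symE by auto
    have "\<not> reach_in E ({..<n} - S0) u0 v0" unfolding rest reach_in_def rel using uv0 by simp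
    moreover have "reach_in E {..<n} u0 v0" using assms(2) uv0 unfolding connected_graph_def by simp
    ultimately show ?thesis unfolding separator_def S0_def using uv0 by auto
  qed
  have finK: "finite K"
  proof (rule finite_subset)
    show "K \<subseteq> card ` Pow {..<n}" unfolding K_def separator_def by auto
  qed simp
  have Kne: "K \<noteq> {}" unfolding K_def using S0sep by auto
  have kmin: "vertex_connectivity n E \<le> card T" if "separator n E T" for T
    unfolding vertex_connectivity_def K_def[symmetric] using that finK by (intro Min_le) (auto simp: K_def)
  obtain Smin where Smin: "separator n E Smin" "card Smin = vertex_connectivity n E"
    using Min_in[OF finK Kne] unfolding vertex_connectivity_def K_def[symmetric] by (auto simp: K_def)
  have Sminn: "Smin \<subseteq> {..<n}" using Smin(1) unfolding separator_def by auto
  have a_le: "a \<le> real (vertex_connectivity n E)" using G1(1)[OF sg Smin(1) P1] Smin(2) by simp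
  show ?thesis
  proof
    assume eq: "real (vertex_connectivity n E) = algebraic_connectivity n E"
    have full: "E i j" if "i \<in> Smin" "j < n" "j \<notin> Smin" for i j
    proof (rule ccontr)
      assume "\<not> E i j"
      hence "a < real (card Smin)" using G1(2)[OF sg Smin(1) P1] that by blast
      thus False using eq ac Smin(2) by simp
    qed
    obtain p q where pq: "p \<in> {..<n} - Smin" "q \<in> {..<n} - Smin" "\<not> reach_in E ({..<n} - Smin) p q"
      using Smin(1) unfolding separator_def by auto
    have pq_ne: "p \<noteq> q" using pq reach_refl by metis
    have pq_nE: "\<not> E p q" using pq reach_edge by metis
    have clique: "E i j" if ij: "i \<in> Smin" "j \<in> Smin" "i \<noteq> j" for i j
    proof (rule ccontr)
      assume nE: "\<not> E i j"
      have inn: "i < n" "j < n" "p < n" "q < n" using ij pq Sminn by auto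
      have cyc: "is_cycle n E [i, p, j, q]"
      proof (rule cycle4)
        show "E i p" using full ij pq by auto
        show "E p j" using full[of j p] ij pq symE inn by auto
        show "E j q" using full ij pq by auto
        show "E q i" using full[of i q] ij pq symE inn by auto
        show "distinct [i, p, j, q]" using ij pq pq_ne by auto
        show "set [i, p, j, q] \<subseteq> {..<n}" using inn by auto
      qed
      have "has_chord E [i, p, j, q]" using assms(3) cyc unfolding chordal_def by auto
      moreover have "\<not> has_chord E [i, p, j, q]"
        by (rule cycle4_no_chord) (use nE pq_nE symE inn in auto)
      ultimately show False by blast
    qed
    have univ: "\<forall>v\<in>Smin. universal_vertex n E v"
      unfolding universal_vertex_def using Sminn full clique by blast
    have minimal: "minimal_separator n E Smin"
      unfolding minimal_separator_def
    proof (intro conjI allI impI notI)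
      show "separator n E Smin" by (rule Smin(1))
      fix T assume T: "T \<subset> Smin" "separator n E T"
      have "finite Smin" using Sminn finite_subset by blast
      hence "card T < card Smin" using T(1) psubset_card_mono by blast
      thus False using kmin[OF T(2)] Smin(2) by simp
    qed
    show "\<exists>S. minimal_separator n E S \<and> (\<forall>v\<in>S. universal_vertex n E v)"
      using minimal univ by blast
  next
    assume "\<exists>S. minimal_separator n E S \<and> (\<forall>v\<in>S. universal_vertex n E v)"
    then obtain S where S: "minimal_separator n E S" "\<forall>v\<in>S. universal_vertex n E v" by blast
    have Ssep: "separator n E S" using S(1) unfolding minimal_separator_def by simp
    have Sn: "S \<subseteq> {..<n}" using Ssep unfolding separator_def by simp
    have "real (card S) \<le> a" by (rule P2) (rule G2[OF sg Sn S(2)])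
    moreover have "vertex_connectivity n E \<le> card S" by (rule kmin[OF Ssep])
    ultimately show "real (vertex_connectivity n E) = algebraic_connectivity n E"
      using a_le ac by simp
  qed
qed


end
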